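(* If $(V,\rho)$ is a purely irreducible $\mathfrak{sl}(2)$-module, then it is a Casimir module (i.e. $C_\rho=\mu\,\mathrm{Id}_V$ for some $\mu\in\mathbb{C}$) and $\mathrm{End}_{\mathfrak{sl}(2)}(V)=\mathbb{C}$.
   Context: $\mathfrak{sl}(2)$ has basis $L_{-1}=f$, $L_0=-\tfrac12 h$, $L_1=-e$ for a Chevalley basis $e,f,h$. An $\mathfrak{sl}(2)$-module $(V,\rho)$ is a $\mathbb{C}[z]$-module via $z\cdot v=\rho(L_0)v$; its Casimir operator is $C_\rho=\rho(L_0)(\rho(L_0)-1)-\rho(L_{-1})\rho(L_1)$. A finite rank torsion free module is one that is torsion free over $\mathbb{C}[z]$ with localization $S^{-1}V$ ($S=\mathbb{C}[z]\setminus\{0\}$) finite-dimensional over $\mathbb{C}(z)$. A submodule $V'$ is pure if $V/V'$ is torsion free. $(V,\rho)$ is purely irreducible if it is a nonzero finite rank torsion free $\mathfrak{sl}(2)$-module having no pure $\mathfrak{sl}(2)$-submodules other than $0$ and $V$ (equivalently, every proper nonzero $\mathfrak{sl}(2)$-submodule $V'$ has $V/V'$ torsion; equivalently, $S^{-1}V$ with its induced $\mathfrak{sl}(2)$-action has no nonzero proper $\mathfrak{sl}(2)$-submodule that is a $\mathbb{C}(z)$-subspace). *)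

theory Defs
  imports "HOL-Computational_Algebra.Polynomial"
begin

text \<open>An sl(2)-module is a complex vector space (carrier = the type 'v, scalar
multiplication sc) with linear operators Lm = rho(L_{-1}), L0 = rho(L_0), Lp = rho(L_1)
satisfying [L_m, L_n] = (m - n) L_{m+n}.\<close>

definition sl2_module ::
  "(complex \<Rightarrow> 'v::ab_group_add \<Rightarrow> 'v) \<Rightarrow> ('v \<Rightarrow> 'v) \<Rightarrow> ('v \<Rightarrow> 'v) \<Rightarrow> ('v \<Rightarrow> 'v) \<Rightarrow> bool" where
  "sl2_module sc Lm L0 Lp \<longleftrightarrow>
     vector_space sc \<and>
     Vector_Spaces.linear sc sc Lm \<and> Vector_Spaces.linear sc sc L0 \<and> Vector_Spaces.linear sc sc Lp \<and>
     (\<forall>v. Lp (Lm v) - Lm (Lp v) = sc 2 (L0 v)) \<and>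
     (\<forall>v. L0 (Lp v) - Lp (L0 v) = - Lp v) \<and>
     (\<forall>v. L0 (Lm v) - Lm (L0 v) = Lm v)"

text \<open>Action of a polynomial p in C[z] via z acting as T = rho(L_0).\<close>
definition opoly :: "(complex \<Rightarrow> 'v::ab_group_add \<Rightarrow> 'v) \<Rightarrow> ('v \<Rightarrow> 'v) \<Rightarrow> complex poly \<Rightarrow> 'v \<Rightarrow> 'v" where
  "opoly sc T p v = (\<Sum>i\<le>degree p. sc (coeff p i) ((T ^^ i) v))"

definition torsion_free :: "(complex \<Rightarrow> 'v::ab_group_add \<Rightarrow> 'v) \<Rightarrow> ('v \<Rightarrow> 'v) \<Rightarrow> bool" where
  "torsion_free sc T \<longleftrightarrow> (\<forall>p v. p \<noteq> 0 \<and> opoly sc T p v = 0 \<longrightarrow> v = 0)"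

text \<open>S^{-1}V finite-dimensional over C(z): finitely many elements b (as b/1) span S^{-1}V,
i.e. every v has some nonzero p with p.v in the C[z]-span of B.\<close>
definition finite_rank :: "(complex \<Rightarrow> 'v::ab_group_add \<Rightarrow> 'v) \<Rightarrow> ('v \<Rightarrow> 'v) \<Rightarrow> bool" where
  "finite_rank sc T \<longleftrightarrow>
     (\<exists>B. finite B \<and> (\<forall>v. \<exists>p c. p \<noteq> 0 \<and> opoly sc T p v = (\<Sum>b\<in>B. opoly sc T (c b) b)))"

definition sl2_submodule ::
  "(complex \<Rightarrow> 'v::ab_group_add \<Rightarrow> 'v) \<Rightarrow> ('v \<Rightarrow> 'v) \<Rightarrow> ('v \<Rightarrow> 'v) \<Rightarrow> ('v \<Rightarrow> 'v) \<Rightarrow> 'v set \<Rightarrow> bool" where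
  "sl2_submodule sc Lm L0 Lp W \<longleftrightarrow>
     module.subspace sc W \<and> Lm ` W \<subseteq> W \<and> L0 ` W \<subseteq> W \<and> Lp ` W \<subseteq> W"

text \<open>Pure: V/W torsion free over C[z].\<close>
definition pure_submodule ::
  "(complex \<Rightarrow> 'v::ab_group_add \<Rightarrow> 'v) \<Rightarrow> ('v \<Rightarrow> 'v) \<Rightarrow> ('v \<Rightarrow> 'v) \<Rightarrow> ('v \<Rightarrow> 'v) \<Rightarrow> 'v set \<Rightarrow> bool" where
  "pure_submodule sc Lm L0 Lp W \<longleftrightarrow>
     sl2_submodule sc Lm L0 Lp W \<and> (\<forall>p v. p \<noteq> 0 \<and> opoly sc L0 p v \<in> W \<longrightarrow> v \<in> W)"

definition purely_irreducible ::
  "(complex \<Rightarrow> 'v::ab_group_add \<Rightarrow> 'v) \<Rightarrow> ('v \<Rightarrow> 'v) \<Rightarrow> ('v \<Rightarrow> 'v) \<Rightarrow> ('v \<Rightarrow> 'v) \<Rightarrow> bool" where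
  "purely_irreducible sc Lm L0 Lp \<longleftrightarrow>
     sl2_module sc Lm L0 Lp \<and> (\<exists>v::'v. v \<noteq> 0) \<and>
     torsion_free sc L0 \<and> finite_rank sc L0 \<and>
     (\<forall>W. pure_submodule sc Lm L0 Lp W \<longrightarrow> W = {0} \<or> W = UNIV)"

definition casimir :: "('v::ab_group_add \<Rightarrow> 'v) \<Rightarrow> ('v \<Rightarrow> 'v) \<Rightarrow> ('v \<Rightarrow> 'v) \<Rightarrow> 'v \<Rightarrow> 'v" where
  "casimir Lm L0 Lp v = L0 (L0 v) - L0 v - Lm (Lp v)"

end

theory Submission
  imports Defs "HOL-Computational_Algebra.Fundamental_Theorem_Algebra"
begin


definition pact :: "('a::comm_ring_1 \<Rightarrow> 'v::ab_group_add \<Rightarrow> 'v) \<Rightarrow> ('v \<Rightarrow> 'v) \<Rightarrow> 'a poly \<Rightarrow> 'v \<Rightarrow> 'v" where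
  "pact s T p v = (\<Sum>i\<le>degree p. s (coeff p i) ((T ^^ i) v))"

definition mlin :: "('a::comm_ring_1 \<Rightarrow> 'v::ab_group_add \<Rightarrow> 'v) \<Rightarrow> ('v \<Rightarrow> 'v) \<Rightarrow> bool" where
  "mlin s T \<longleftrightarrow> (\<forall>x y. T (x+y) = T x + T y) \<and> (\<forall>a x. T (s a x) = s a (T x))"

lemma mlin_add: "mlin s T \<Longrightarrow> T (x+y) = T x + T y" by (simp add: mlin_def)
lemma mlin_scale: "mlin s T \<Longrightarrow> T (s a x) = s a (T x)" by (simp add: mlin_def)
lemma mlin_zero: "mlin s T \<Longrightarrow> T 0 = 0"
  using mlin_add[of s T 0 0] by simp
lemma mlin_sum: "mlin s T \<Longrightarrow> T (sum g A) = (\<Sum>x\<in>A. T (g x))"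
  by (induct A rule: infinite_finite_induct) (simp_all add: mlin_zero mlin_add)
definition addf :: "('v::ab_group_add \<Rightarrow> 'w::ab_group_add) \<Rightarrow> bool" where
  "addf f \<longleftrightarrow> (\<forall>x y. f (x+y) = f x + f y)"
lemma addf_zero: "addf f \<Longrightarrow> f 0 = 0"
  unfolding addf_def by (metis add_cancel_right_right)
lemma addf_sum: "addf f \<Longrightarrow> f (sum g A) = (\<Sum>x\<in>A. f (g x))"
  by (induct A rule: infinite_finite_induct) (simp_all add: addf_zero, simp add: addf_def)
lemma mlin_addf: "mlin s f \<Longrightarrow> addf f" by (simp add: mlin_def addf_def)
lemma mlin_funpow: "mlin s T \<Longrightarrow> mlin s (T ^^ n)"
  by (induct n) (auto simp: mlin_def)

context module
begin

lemma scale_sum_right': "scale a (sum g A) = (\<Sum>x\<in>A. scale a (g x))"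
  by (induct A rule: infinite_finite_induct) (simp_all add: scale_right_distrib)
lemma scale_sum_left': "scale (sum g A) x = (\<Sum>i\<in>A. scale (g i) x)"
  by (induct A rule: infinite_finite_induct) (simp_all add: scale_left_distrib)

lemma pact_bound:
  assumes "degree p \<le> N"
  shows "pact scale T p v = (\<Sum>i\<le>N. scale (coeff p i) ((T ^^ i) v))"
proof -
  have "(\<Sum>i\<le>N. scale (coeff p i) ((T ^^ i) v)) = (\<Sum>i\<le>degree p. scale (coeff p i) ((T ^^ i) v))"
    using assms by (intro sum.mono_neutral_right) (auto simp: coeff_eq_0)
  thus ?thesis by (simp add: pact_def)
qed

lemma pact_0[simp]: "pact scale T 0 v = 0" by (simp add: pact_def)
lemma pact_const[simp]: "pact scale T [:a:] v = scale a v" by (simp add: pact_def)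
lemma pact_one[simp]: "pact scale T 1 v = v" by (simp add: pact_def)

lemma pact_add: "pact scale T (p + q) v = pact scale T p v + pact scale T q v"
proof -
  let ?N = "max (degree p) (degree q)"
  have "degree (p+q) \<le> ?N" by (rule degree_add_le) auto
  then show ?thesis
    by (simp add: pact_bound[of _ ?N] scale_left_distrib sum.distrib)
qed

lemma pact_smult: "pact scale T (smult a p) v = scale a (pact scale T p v)"
  by (simp add: pact_bound[of _ "degree p"] scale_sum_right' degree_smult_le)

lemma pact_sum: "pact scale T (sum f A) v = (\<Sum>x\<in>A. pact scale T (f x) v)"
  by (induct A rule: infinite_finite_induct) (simp_all add: pact_add)

lemma pact_minus: "pact scale T (- p) v = - pact scale T p v"
  using pact_add[of T p "-p" v] by (simp add: eq_neg_iff_add_eq_0 add.commute)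

lemma pact_diff: "pact scale T (p - q) v = pact scale T p v - pact scale T q v"
  using pact_add[of T p "-q" v] by (simp add: pact_minus)

lemma pact_monom: "pact scale T (monom a n) v = scale a ((T ^^ n) v)"
  proof -
  have "pact scale T (monom a n) v = (\<Sum>i\<le>n. scale (coeff (monom a n) i) ((T ^^ i) v))"
    by (rule pact_bound) (simp add: degree_monom_le)
  also have "\<dots> = (\<Sum>i\<in>{n}. scale (coeff (monom a n) i) ((T ^^ i) v))"
    by (rule sum.mono_neutral_right) (auto simp: coeff_monom)
  finally show ?thesis by simp
qed

lemma pact_vadd: "mlin scale T \<Longrightarrow> pact scale T p (v + w) = pact scale T p v + pact scale T p w"
  by (simp add: pact_def mlin_add[OF mlin_funpow] scale_right_distrib sum.distrib)

lemma pact_vzero: "mlin scale T \<Longrightarrow> pact scale T p 0 = 0"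
  by (simp add: pact_def mlin_zero[OF mlin_funpow])

lemma pact_vscale: "mlin scale T \<Longrightarrow> pact scale T p (scale a v) = scale a (pact scale T p v)"
  by (simp add: pact_def mlin_scale[OF mlin_funpow] scale_sum_right' mult.commute)

lemma pact_comm:
  assumes "mlin scale f" "\<And>x. f (T x) = T (f x)"
  shows "f (pact scale T p v) = pact scale T p (f v)"
proof -
  have "f ((T ^^ i) x) = (T ^^ i) (f x)" for i x
    by (induct i) (simp_all add: assms(2))
  thus ?thesis by (simp add: pact_def mlin_sum[OF assms(1)] mlin_scale[OF assms(1)])
qed

lemma pact_pCons:
  assumes "mlin scale T"
  shows "pact scale T (pCons a p) v = scale a v + T (pact scale T p v)"
proof -
  have "pact scale T (pCons a p) v = (\<Sum>i\<le>Suc (degree p). scale (coeff (pCons a p) i) ((T ^^ i) v))"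
    by (rule pact_bound) (simp add: degree_pCons_le)
  also have "\<dots> = scale a v + (\<Sum>i\<le>degree p. scale (coeff p i) ((T ^^ Suc i) v))"
    by (subst sum.atMost_Suc_shift) simp
  also have "\<dots> = scale a v + T (pact scale T p v)"
    by (simp add: pact_def mlin_sum[OF assms] mlin_scale[OF assms])
  finally show ?thesis .
qed

lemma pact_X: "mlin scale T \<Longrightarrow> pact scale T [:0,1:] v = T v"
  by (simp add: pact_pCons)

lemma pact_mult:
  assumes "mlin scale T"
  shows "pact scale T (p * q) v = pact scale T p (pact scale T q v)"
proof (induct p)
  case 0 then show ?case by simp
next
  case (pCons a p)
  have "pCons a p * q = smult a q + pCons 0 (p * q)" by simp
  then show ?case
    using pCons by (simp add: pact_add pact_smult pact_pCons[OF assms])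
qed

lemma pact_mlin: "mlin scale T \<Longrightarrow> mlin scale (pact scale T p)"
  by (simp add: mlin_def pact_vadd pact_vscale)

lemma pact_commute:
  assumes "mlin scale T"
  shows "pact scale T p (pact scale T q v) = pact scale T q (pact scale T p v)"
  by (metis assms mult.commute pact_mult)

lemma pact_module: "mlin scale T \<Longrightarrow> module (pact scale T)"
  by unfold_locales (simp_all add: pact_vadd pact_add pact_mult)

lemma pact_pcompose:
  assumes "mlin scale T" "mlin scale f" "\<And>x. f (T x) = pact scale T q (f x)"
  shows "f (pact scale T p v) = pact scale T (pcompose p q) (f v)"
proof (induct p)
  case 0 then show ?case by (simp add: mlin_zero[OF assms(2)])
next
  case (pCons a p)
  show ?case
    by (simp add: pact_pCons[OF assms(1)] pcompose_pCons pact_add pact_mult[OF assms(1)]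
        mlin_add[OF assms(2)] mlin_scale[OF assms(2)] assms(3) pCons)
qed

end

lemma pact_map_poly:
  assumes "module s" "module s'" "addf f" "\<tau> 0 = 0"
    "\<And>a x. f (s a x) = s' (\<tau> a) (f x)" "\<And>x. f (T x) = T' (f x)"
  shows "f (pact s T p v) = pact s' T' (map_poly \<tau> p) (f v)"
proof -
  have c: "f ((T ^^ i) x) = (T' ^^ i) (f x)" for i x
    by (induct i) (simp_all add: assms(6))
  have "pact s' T' (map_poly \<tau> p) (f v) = (\<Sum>i\<le>degree p. s' (coeff (map_poly \<tau> p) i) ((T' ^^ i) (f v)))"
    by (rule module.pact_bound[OF assms(2)]) (simp add: map_poly_degree_leq)
  also have "\<dots> = f (pact s T p v)"
    by (simp add: pact_def addf_sum[OF assms(3)] assms(5) c coeff_map_poly[of \<tau>, OF assms(4)])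
  finally show ?thesis by simp
qed



lemma dep_bound:
  fixes s :: "'a::idom \<Rightarrow> 'v::ab_group_add \<Rightarrow> 'v"
  assumes m: "module s" and "finite B"
  shows "finite I \<Longrightarrow> card I > card B \<Longrightarrow> (\<forall>i\<in>I. w i = (\<Sum>b\<in>B. s (c i b) b)) \<Longrightarrow>
    \<exists>r. (\<exists>i\<in>I. r i \<noteq> 0) \<and> (\<Sum>i\<in>I. s (r i) (w i)) = 0"
  using assms(2)
proof (induct B arbitrary: I w c rule: finite_induct)
  interpret module s by (rule m)
  case empty
  then obtain i0 where "i0 \<in> I" by fastforce
  show ?case
    by (rule exI[of _ "\<lambda>_. 1"]) (use empty \<open>i0 \<in> I\<close> in auto)
next
  interpret module s by (rule m)
  case (insert b B)
  show ?case
  proof (cases "\<forall>i\<in>I. c i b = 0")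
    case True
    have "\<forall>i\<in>I. w i = (\<Sum>b\<in>B. s (c i b) b)"
      using insert True by simp
    then show ?thesis using insert by auto
  next
    case False
    then obtain i0 where i0: "i0 \<in> I" "c i0 b \<noteq> 0" by auto
    define I' where "I' = I - {i0}"
    define w' where "w' i = s (c i0 b) (w i) - s (c i b) (w i0)" for i
    define c' where "c' i b' = c i0 b * c i b' - c i b * c i0 b'" for i b'
    have cardI': "card I' > card B" using insert i0 by (simp add: I'_def)
    have wexp: "w i = s (c i b) b + (\<Sum>b'\<in>B. s (c i b') b')" if "i \<in> I" for i
      using insert that by simp
    have "w' i = (\<Sum>b'\<in>B. s (c' i b') b')" if "i \<in> I'" for i
    proof -
      have "w' i = s (c i0 b) (s (c i b) b + (\<Sum>b'\<in>B. s (c i b') b'))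
           - s (c i b) (s (c i0 b) b + (\<Sum>b'\<in>B. s (c i0 b') b'))"
        using that i0 by (simp add: w'_def wexp I'_def)
      also have "\<dots> = (\<Sum>b'\<in>B. s (c i0 b * c i b') b') - (\<Sum>b'\<in>B. s (c i b * c i0 b') b')"
        by (simp add: scale_right_distrib scale_sum_right' mult.commute)
      also have "\<dots> = (\<Sum>b'\<in>B. s (c' i b') b')"
        by (simp add: c'_def scale_left_diff_distrib sum_subtractf)
      finally show ?thesis .
    qed
    then obtain r' where r': "\<exists>i\<in>I'. r' i \<noteq> 0" "(\<Sum>i\<in>I'. s (r' i) (w' i)) = 0"
      using insert(3)[of I' w' c'] cardI' insert(4) by (auto simp: I'_def)
    define r where "r i = (if i = i0 then - (\<Sum>j\<in>I'. r' j * c j b) else r' i * c i0 b)" for i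
    have "0 = (\<Sum>i\<in>I'. s (r' i * c i0 b) (w i)) - s (\<Sum>j\<in>I'. r' j * c j b) (w i0)"
      by (simp add: r'(2)[symmetric] w'_def scale_right_diff_distrib sum_subtractf scale_sum_left')
    also have "\<dots> = (\<Sum>i\<in>I. s (r i) (w i))"
    proof -
      have "(\<Sum>i\<in>I. s (r i) (w i)) = s (r i0) (w i0) + (\<Sum>i\<in>I'. s (r i) (w i))"
        using i0 insert(4) by (simp add: I'_def sum.remove)
      also have "(\<Sum>i\<in>I'. s (r i) (w i)) = (\<Sum>i\<in>I'. s (r' i * c i0 b) (w i))"
        by (rule sum.cong) (auto simp: r_def I'_def)
      finally show ?thesis by (simp add: r_def scale_minus_left)
    qed
    finally have "(\<Sum>i\<in>I. s (r i) (w i)) = 0" by simp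
    moreover from r'(1) obtain i1 where "i1 \<in> I'" "r' i1 \<noteq> 0" by auto
    then have "i1 \<in> I" "r i1 \<noteq> 0" using i0 by (auto simp: r_def I'_def)
    ultimately show ?thesis by blast
  qed
qed



locale PI =
  fixes sc :: "complex \<Rightarrow> 'v::ab_group_add \<Rightarrow> 'v" and Lm L0 Lp :: "'v \<Rightarrow> 'v"
  assumes pi: "purely_irreducible sc Lm L0 Lp"
begin

abbreviation op where "op \<equiv> pact sc L0"

lemma sl2: "sl2_module sc Lm L0 Lp" using pi by (simp add: purely_irreducible_def)
lemma vs: "vector_space sc" using sl2 by (simp add: sl2_module_def)
lemma msc: "module sc" using vs by (simp add: module_iff_vector_space)

sublocale msc: module sc by (rule msc)

lemma linLm: "mlin sc Lm" and linL0: "mlin sc L0" and linLp: "mlin sc Lp"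
  using sl2 by (auto simp: sl2_module_def Vector_Spaces.linear_iff mlin_def)

lemma rel1: "Lp (Lm v) = Lm (Lp v) + sc 2 (L0 v)"
proof -
  have "Lp (Lm v) - Lm (Lp v) = sc 2 (L0 v)" using sl2 unfolding sl2_module_def by blast
  then show ?thesis by (simp add: algebra_simps)
qed
lemma rel2: "Lp (L0 v) = L0 (Lp v) + Lp v"
proof -
  have "L0 (Lp v) - Lp (L0 v) = - Lp v" using sl2 unfolding sl2_module_def by blast
  then show ?thesis by (simp add: algebra_simps)
qed
lemma rel3: "Lm (L0 v) = L0 (Lm v) - Lm v"
proof -
  have "L0 (Lm v) - Lm (L0 v) = Lm v" using sl2 unfolding sl2_module_def by blast
  then show ?thesis by (simp add: algebra_simps)
qed

lemma opoly_eq: "opoly sc L0 = op"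
  by (intro ext) (simp add: opoly_def pact_def)

lemma torsion: "p \<noteq> 0 \<Longrightarrow> op p v = 0 \<Longrightarrow> v = 0"
  using pi by (auto simp: purely_irreducible_def torsion_free_def opoly_eq)

lemma mop: "module op" by (rule msc.pact_module[OF linL0])



lemma nontriv: "\<exists>v::'v. v \<noteq> 0" using pi by (simp add: purely_irreducible_def)

lemma Lp_op: "Lp (op p v) = op (pcompose p [:1,1:]) (Lp v)"
proof (rule msc.pact_pcompose[OF linL0 linLp])
  fix x show "Lp (L0 x) = op [:1, 1:] (Lp x)"
    by (simp add: msc.pact_pCons[OF linL0] rel2 add.commute)
qed

lemma Lm_op: "Lm (op p v) = op (pcompose p [:-1,1:]) (Lm v)"
proof (rule msc.pact_pcompose[OF linL0 linLm])
  fix x show "Lm (L0 x) = op [:-1, 1:] (Lm x)"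
    by (simp add: msc.pact_pCons[OF linL0] rel3 msc.scale_minus_left)
qed

lemma rank:
  obtains N :: nat where "\<And>w. \<exists>r. (\<exists>i\<le>N. r i \<noteq> 0) \<and> (\<Sum>i\<le>N. op (r i) (w i)) = 0"
proof -
  obtain B where B: "finite B" "\<And>v. \<exists>p c. p \<noteq> 0 \<and> op p v = (\<Sum>b\<in>B. op (c b) b)"
    using pi by (auto simp: purely_irreducible_def finite_rank_def opoly_eq)
  obtain P C where PC: "\<And>v. P v \<noteq> 0 \<and> op (P v) v = (\<Sum>b\<in>B. op (C v b) b)"
    using B(2) by metis
  have "\<exists>r. (\<exists>i\<le>card B. r i \<noteq> 0) \<and> (\<Sum>i\<le>card B. op (r i) (w i)) = 0" for w
  proof -
    obtain r where r: "\<exists>i\<in>{..card B}. r i \<noteq> 0" "(\<Sum>i\<in>{..card B}. op (r i) (op (P (w i)) (w i))) = 0"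
      using dep_bound[OF mop B(1), of "{..card B}" "\<lambda>i. op (P (w i)) (w i)" "\<lambda>i. C (w i)"] PC
      by auto
    show ?thesis
    proof (rule exI[of _ "\<lambda>i. r i * P (w i)"], intro conjI)
      show "\<exists>i\<le>card B. r i * P (w i) \<noteq> 0"
      proof -
        from r(1) obtain i where "i \<le> card B" "r i \<noteq> 0" by auto
        moreover have "P (w i) \<noteq> 0" using PC by simp
        ultimately show ?thesis by auto
      qed
      have "op (r i * P (w i)) (w i) = op (r i) (op (P (w i)) (w i))" for i
        by (rule module.scale_scale[OF mop, symmetric])
      then show "(\<Sum>i\<le>card B. op (r i * P (w i)) (w i)) = 0" using r(2) by (simp only: atMost_def)
    qed
  qed
  note key = this
  show ?thesis by (rule that, rule key)
qed

lemma chain_aux: "Lp w = 0 \<Longrightarrow> \<exists>a. Lp ((Lm ^^ Suc k) w) = op [:a, of_nat (2 * Suc k):] ((Lm ^^ k) w)"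
proof (induct k)
  case 0
  have "Lp (Lm w) = sc 2 (L0 w)" using rel1[of w] 0 mlin_zero[OF linLm] by simp
  moreover have "op [:0, 2:] w = sc 2 (L0 w)"
    by (simp add: msc.pact_pCons[OF linL0] mlin_scale[OF linL0])
  ultimately show ?case by (intro exI[of _ 0]) simp
next
  case (Suc k)
  then obtain a where a: "Lp ((Lm ^^ Suc k) w) = op [:a, of_nat (2 * Suc k):] ((Lm ^^ k) w)" by blast
  let ?x = "(Lm ^^ Suc k) w"
  have "Lp ((Lm ^^ Suc (Suc k)) w) = Lm (Lp ?x) + sc 2 (L0 ?x)"
    by (simp only: funpow.simps comp_apply rel1)
  also have "Lm (Lp ?x) = op (pcompose [:a, of_nat (2 * Suc k):] [:-1,1:]) ?x"
    unfolding a Lm_op by simp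
  also have "sc 2 (L0 ?x) = op [:0,2:] ?x"
    by (simp add: msc.pact_pCons[OF linL0] mlin_scale[OF linL0])
  also have "op (pcompose [:a, of_nat (2 * Suc k):] [:-1,1:]) ?x + op [:0,2:] ?x
     = op (pcompose [:a, of_nat (2 * Suc k):] [:-1,1:] + [:0,2:]) ?x"
    by (rule msc.pact_add[symmetric])
  also have "pcompose [:a, of_nat (2 * Suc k):] [:-1,1:] + [:0,2:] = [:a - of_nat (2 * Suc k), of_nat (2 * Suc (Suc k)):]"
    by (simp add: pcompose_pCons algebra_simps)
  finally show ?case by blast
qed

lemma chain: "w \<noteq> 0 \<Longrightarrow> Lp w = 0 \<Longrightarrow> (Lm ^^ k) w \<noteq> 0"
proof (induct k)
  case (Suc k)
  obtain a where a: "Lp ((Lm ^^ Suc k) w) = op [:a, of_nat (2 * Suc k):] ((Lm ^^ k) w)"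
    using chain_aux Suc by blast
  have "of_nat (2 * Suc k) \<noteq> (0::complex)" by (rule notI, simp only: of_nat_eq_0_iff, simp)
  then have nz: "[:a, of_nat (2 * Suc k):] \<noteq> 0" by simp
  have "op [:a, of_nat (2 * Suc k):] ((Lm ^^ k) w) \<noteq> 0"
    using torsion[OF nz] Suc by blast
  then show ?case using a mlin_zero[OF linLp] by metis
qed simp

end


definition sh :: "int \<Rightarrow> complex poly poly \<Rightarrow> complex poly poly" where
  "sh k F = map_poly (\<lambda>c. pcompose c [:of_int k, 1:]) F"

lemma pcomp_shift_eq0: "pcompose c [:a, 1:] = 0 \<longleftrightarrow> c = (0::complex poly)"
  by (rule pcompose_eq_0_iff) simp

lemma degree_sh[simp]: "degree (sh k F) = degree F"
  unfolding sh_def by (rule degree_map_poly) (simp add: pcomp_shift_eq0)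

lemma sh_eq0[simp]: "sh k F = 0 \<longleftrightarrow> F = 0"
  unfolding sh_def by (subst map_poly_eq_0_iff) (auto simp: pcomp_shift_eq0)

lemma coeff_sh: "coeff (sh k F) i = pcompose (coeff F i) [:of_int k, 1:]"
  unfolding sh_def by (subst coeff_map_poly) simp_all

lemma sh_0[simp]: "sh 0 F = F"
  by (rule poly_eqI) (simp add: coeff_sh)

lemma sh_sh: "sh a (sh b F) = sh (a + b) F"
proof (rule poly_eqI)
  fix i
  have "[:of_int b, 1:] \<circ>\<^sub>p [:of_int a, 1:] = [:of_int (a + b), 1::complex:]"
    by (simp add: pcompose_pCons)
  then show "coeff (sh a (sh b F)) i = coeff (sh (a + b) F) i"
    by (simp add: coeff_sh pcompose_assoc[symmetric])
qed

lemma sh_smult: "sh k (smult a F) = smult (pcompose a [:of_int k, 1:]) (sh k F)"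
  by (rule poly_eqI) (simp add: coeff_sh pcompose_mult)

locale PIphi = PI sc Lm L0 Lp
  for sc :: "complex \<Rightarrow> 'v::ab_group_add \<Rightarrow> 'v" and Lm L0 Lp :: "'v \<Rightarrow> 'v" +
  fixes \<phi> :: "'v \<Rightarrow> 'v"
  assumes phlin: "Vector_Spaces.linear sc sc \<phi>"
    and cm: "\<And>v. \<phi> (Lm v) = Lm (\<phi> v)"
    and c0: "\<And>v. \<phi> (L0 v) = L0 (\<phi> v)"
    and cp: "\<And>v. \<phi> (Lp v) = Lp (\<phi> v)"
begin

abbreviation act where "act \<equiv> pact op \<phi>"

lemma linphi: "mlin sc \<phi>"
  using phlin by (auto simp: Vector_Spaces.linear_iff mlin_def)

lemma phi_op: "\<phi> (op p v) = op p (\<phi> v)"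
  by (rule msc.pact_comm[of \<phi> L0, OF linphi c0])

lemma mlinop: "mlin op \<phi>"
  using linphi phi_op by (simp add: mlin_def)

lemma mact: "module act" by (rule module.pact_module[OF mop mlinop])

lemmas act_mult = module.pact_mult[OF mop mlinop]
lemmas act_commute = module.pact_commute[OF mop mlinop]
lemmas act_vzero = module.pact_vzero[OF mop mlinop]
lemmas act_vadd = module.pact_vadd[OF mop mlinop]
lemmas act_vscale = module.pact_vscale[OF mop mlinop]
lemmas act_add = module.pact_add[OF mop]
lemmas act_sum = module.pact_sum[OF mop]
lemmas act_smult = module.pact_smult[OF mop]
lemmas act_monom = module.pact_monom[OF mop]
lemmas act_bound = module.pact_bound[OF mop]

lemma act_vsum: "act F (sum g A) = (\<Sum>x\<in>A. act F (g x))"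
  by (rule addf_sum) (simp add: addf_def act_vadd)

lemma Lp_act1: "Lp (act F v) = act (sh 1 F) (Lp v)"
  unfolding sh_def
  by (rule pact_map_poly[OF mop mop mlin_addf[OF linLp]]) (simp_all add: Lp_op cp)

lemma Lm_act1: "Lm (act F v) = act (sh (-1) F) (Lm v)"
  unfolding sh_def
  by (rule pact_map_poly[OF mop mop mlin_addf[OF linLm]]) (simp_all add: Lm_op cm)

lemma Lp_pow_act: "act F v = 0 \<Longrightarrow> act (sh (int j) F) ((Lp ^^ j) v) = 0"
proof (induct j)
  case (Suc j)
  have "act (sh (int (Suc j)) F) ((Lp ^^ Suc j) v) = Lp (act (sh (int j) F) ((Lp ^^ j) v))"
    by (simp add: Lp_act1 sh_sh add.commute)
  then show ?case using Suc mlin_zero[OF linLp] by simp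
qed simp

lemma Lm_pow_act: "act F v = 0 \<Longrightarrow> act (sh (- int j) F) ((Lm ^^ j) v) = 0"
proof (induct j)
  case (Suc j)
  have "act (sh (- int (Suc j)) F) ((Lm ^^ Suc j) v) = Lm (act (sh (- int j) F) ((Lm ^^ j) v))"
    by (simp add: Lm_act1 sh_sh)
  then show ?case using Suc mlin_zero[OF linLm] by simp
qed simp

end



context PIphi
begin

lemma propto:
  assumes min: "\<And>H u. H \<noteq> 0 \<Longrightarrow> degree H < d \<Longrightarrow> act H u = 0 \<Longrightarrow> u = 0"
    and dg: "degree Ga = d" "degree Gb = d" and nz: "Ga \<noteq> 0" "Gb \<noteq> 0"
    and u: "u \<noteq> 0" "act Ga u = 0" "act Gb u = 0"
  shows "\<exists>a b. a \<noteq> 0 \<and> b \<noteq> 0 \<and> smult a Gb = smult b Ga"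
proof -
  define r where "r = pseudo_mod Gb Ga"
  obtain a q where aq: "a \<noteq> 0" "smult a Gb = Ga * q + r"
    using pseudo_mod(1)[OF nz(1), of Gb] r_def by blast
  have rd: "r = 0 \<or> degree r < degree Ga"
    using pseudo_mod(2)[OF nz(1), of Gb] r_def by blast
  have "r = smult a Gb - q * Ga" using aq(2) by (simp add: algebra_simps)
  then have "act r u = op a (act Gb u) - act q (act Ga u)"
    by (simp add: module.pact_diff[OF mop] act_smult act_mult)
  then have "act r u = 0" using u by (simp add: act_vzero msc.pact_vzero[OF linL0])
  then have r0: "r = 0" using rd min u(1) dg by blast
  have q0: "q \<noteq> 0" using aq nz r0 by auto
  have "degree (smult a Gb) = degree (Ga * q)" using aq r0 by simp
  then have "d = d + degree q" using aq(1) dg degree_mult_eq[OF nz(1) q0] by simp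
  then have "degree q = 0" by simp
  then obtain b where b: "q = [:b:]" by (metis degree_eq_zeroE)
  have "b \<noteq> 0" using q0 b by simp
  moreover have "smult a Gb = smult b Ga" using aq r0 b by simp
  ultimately show ?thesis using aq(1) by blast
qed

lemma indep:
  "finite I \<Longrightarrow> (\<forall>i\<in>I. v i \<noteq> 0 \<and> act (G i) (v i) = 0) \<Longrightarrow> (\<exists>i\<in>I. p i \<noteq> 0) \<Longrightarrow>
   (\<Sum>i\<in>I. op (p i) (v i)) = 0 \<Longrightarrow>
   \<exists>i1\<in>I. \<exists>i2\<in>I. i1 \<noteq> i2 \<and> (\<exists>u. u \<noteq> 0 \<and> act (G i1) u = 0 \<and> act (G i2) u = 0)"
proof (induct "card I" arbitrary: I v p rule: less_induct)
  case less
  obtain i0 where i0: "i0 \<in> I" "p i0 \<noteq> 0" using less.prems by blast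
  define w where "w i = act (G i0) (v i)" for i
  define I2 where "I2 = {i \<in> I - {i0}. p i \<noteq> 0}"
  have I2I: "I2 \<subseteq> I" "i0 \<notin> I2" by (auto simp: I2_def)
  have w0: "w i0 = 0" using less.prems i0 by (simp add: w_def)
  have "0 = act (G i0) (\<Sum>i\<in>I. op (p i) (v i))" using less.prems by (simp add: act_vzero)
  also have "\<dots> = (\<Sum>i\<in>I. op (p i) (w i))" by (simp add: act_vsum act_vscale w_def)
  also have "\<dots> = (\<Sum>i\<in>I2. op (p i) (w i))"
  proof (rule sum.mono_neutral_right[OF less.prems(1) I2I(1)])
    show "\<forall>i\<in>I - I2. op (p i) (w i) = 0"
      using w0 by (auto simp: I2_def msc.pact_vzero[OF linL0])
  qed
  finally have sumw: "(\<Sum>i\<in>I2. op (p i) (w i)) = 0" by simp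
  show ?case
  proof (cases "\<exists>i\<in>I2. w i = 0")
    case True
    then obtain i where i: "i \<in> I2" "w i = 0" by blast
    then have "i \<in> I" "i \<noteq> i0" using I2I by auto
    moreover have "v i \<noteq> 0" "act (G i0) (v i) = 0" "act (G i) (v i) = 0"
      using less.prems i \<open>i \<in> I\<close> by (auto simp: w_def)
    ultimately show ?thesis using i0(1) by blast
  next
    case False
    have "I2 \<noteq> {}"
    proof
      assume e: "I2 = {}"
      have "(\<Sum>i\<in>I. op (p i) (v i)) = op (p i0) (v i0) + (\<Sum>i\<in>I - {i0}. op (p i) (v i))"
        using i0 less.prems(1) by (simp add: sum.remove)
      also have "(\<Sum>i\<in>I - {i0}. op (p i) (v i)) = 0"
        using e by (intro sum.neutral) (auto simp: I2_def)
      finally have "op (p i0) (v i0) = 0" using less.prems by simp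
      then show False using torsion i0 less.prems(2) by blast
    qed
    have card: "card I2 < card I"
      using less.prems(1) I2I i0(1) by (intro psubset_card_mono) auto
    have fin: "finite I2" using less.prems(1) I2I finite_subset by blast
    have hyp: "\<forall>i\<in>I2. w i \<noteq> 0 \<and> act (G i) (w i) = 0"
    proof
      fix i assume i: "i \<in> I2"
      have "act (G i) (w i) = act (G i0) (act (G i) (v i))"
        by (simp add: w_def act_commute)
      also have "\<dots> = 0" using less.prems(2) I2I i by (simp add: act_vzero subset_iff)
      finally show "w i \<noteq> 0 \<and> act (G i) (w i) = 0" using False i by blast
    qed
    have "\<exists>i\<in>I2. p i \<noteq> 0" using \<open>I2 \<noteq> {}\<close> by (auto simp: I2_def)
    from less.hyps[OF card fin hyp this sumw] show ?thesis using I2I by blast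
  qed
qed

end


lemma periodic_const:
  fixes u v :: "complex poly" and p :: complex
  assumes v: "v \<noteq> 0" and p: "p \<noteq> 0" and eq: "pcompose u [:p,1:] * v = u * pcompose v [:p,1:]"
  shows "\<exists>c. u = smult c v"
proof -
  define Rt where "Rt = {x. poly v x = 0}"
  have finRt: "finite Rt" using poly_roots_finite[OF v] by (simp add: Rt_def)
  define s where "s = 1 + (\<Sum>r\<in>Rt. cmod (r / p))"
  define z0 where "z0 = of_real s * p"
  have good: "poly v (z0 + of_nat k * p) \<noteq> 0" for k
  proof
    assume "poly v (z0 + of_nat k * p) = 0"
    then have r: "z0 + of_nat k * p \<in> Rt" by (simp add: Rt_def)
    have "cmod ((z0 + of_nat k * p) / p) \<le> (\<Sum>r\<in>Rt. cmod (r / p))"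
      by (rule member_le_sum[OF r _ finRt]) simp
    moreover have "(z0 + of_nat k * p) / p = of_real (s + real k)"
      using p by (simp add: z0_def field_simps)
    moreover have "s + real k \<ge> 0"
      unfolding s_def by (intro add_nonneg_nonneg sum_nonneg) auto
    ultimately have "s + real k \<le> (\<Sum>r\<in>Rt. cmod (r / p))"
      by (metis norm_of_real abs_of_nonneg of_real_add of_real_of_nat_eq)
    then show False unfolding s_def by simp
  qed
  define c where "c = poly u z0 / poly v z0"
  define h where "h = u - smult c v"
  have ident: "poly h (x + p) * poly v x = poly h x * poly v (x + p)" for x
  proof -
    have "poly (pcompose u [:p,1:] * v) x = poly (u * pcompose v [:p,1:]) x" using eq by simp
    then have "poly u (x + p) * poly v x = poly u x * poly v (x + p)"
      by (simp add: poly_pcompose add.commute)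
    then show ?thesis by (simp add: h_def algebra_simps)
  qed
  have hz: "poly h (z0 + of_nat k * p) = 0" for k
  proof (induct k)
    case 0
    have "poly v z0 \<noteq> 0" using good[of 0] by simp
    then show ?case by (simp add: h_def c_def)
  next
    case (Suc k)
    have "poly h (z0 + of_nat k * p + p) * poly v (z0 + of_nat k * p) = 0"
      using ident[of "z0 + of_nat k * p"] Suc by simp
    then have "poly h (z0 + of_nat k * p + p) = 0" using good[of k] by simp
    then show ?case by (simp add: algebra_simps)
  qed
  have "h = 0"
  proof (rule ccontr)
    assume "h \<noteq> 0"
    then have fin: "finite {x. poly h x = 0}" by (rule poly_roots_finite)
    have "range (\<lambda>k::nat. z0 + of_nat k * p) \<subseteq> {x. poly h x = 0}" using hz by auto
    moreover have "inj (\<lambda>k::nat. z0 + of_nat k * p)" using p by (auto intro!: injI)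
    ultimately show False using fin by (meson finite_imageD finite_subset infinite_UNIV_nat)
  qed
  then show ?thesis by (auto simp: h_def)
qed

context PIphi
begin

lemma eig: "G \<noteq> 0 \<Longrightarrow> pact sc \<phi> G v = 0 \<Longrightarrow> v \<noteq> 0 \<Longrightarrow> \<exists>\<mu> w. w \<noteq> 0 \<and> \<phi> w = sc \<mu> w"
proof (induct "degree G" arbitrary: G v rule: less_induct)
  case less
  show ?case
  proof (cases "degree G = 0")
    case True
    then obtain a where a: "G = [:a:]" by (metis degree_eq_zeroE)
    then have "a \<noteq> 0" using less.prems by simp
    have "sc a v = 0" using less.prems a by simp
    then have "sc (inverse a) (sc a v) = 0" by simp
    then have "v = 0" using \<open>a \<noteq> 0\<close> by simp
    then show ?thesis using less.prems by simp
  next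
    case False
    then have "\<not> constant (poly G)" by (simp add: constant_degree)
    then obtain \<mu> where "poly G \<mu> = 0" using fundamental_theorem_of_algebra by blast
    then obtain Q where Q: "G = [:-\<mu>,1:] * Q" by (metis poly_eq_0_iff_dvd dvdE)
    have Q0: "Q \<noteq> 0" using less.prems Q by auto
    have "degree G = degree [:-\<mu>,1::complex:] + degree Q" unfolding Q
      by (rule degree_mult_eq) (use Q0 in auto)
    then have dQ: "degree Q < degree G" by simp
    define w where "w = pact sc \<phi> Q v"
    have "pact sc \<phi> [:-\<mu>,1:] w = 0"
      using less.prems(2) unfolding Q w_def msc.pact_mult[OF linphi] .
    then have "0 = pact sc \<phi> [:-\<mu>,1:] w" by simp
    also have "\<dots> = sc (-\<mu>) w + \<phi> w" by (simp add: msc.pact_pCons[OF linphi])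
    finally have eq: "\<phi> w = sc \<mu> w"
      by (simp add: msc.scale_minus_left eq_neg_iff_add_eq_0 add.commute)
    show ?thesis
    proof (cases "w = 0")
      case True
      then show ?thesis using less.hyps[OF dQ Q0 _ less.prems(3)] by (simp add: w_def)
    next
      case False then show ?thesis using eq by blast
    qed
  qed
qed

end


context PIphi
begin

lemma kernel_pure:
  assumes w: "w \<noteq> 0" "\<phi> w = sc \<mu> w"
  shows "\<forall>v. \<phi> v = sc \<mu> v"
proof -
  define W where "W = {x. \<phi> x = sc \<mu> x}"
  have sub: "msc.subspace W"
  proof (rule msc.subspaceI)
    show "0 \<in> W" by (simp add: W_def mlin_zero[OF linphi])
    show "x + y \<in> W" if "x \<in> W" "y \<in> W" for x y
      using that by (simp add: W_def mlin_add[OF linphi] msc.scale_right_distrib)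
    show "sc c x \<in> W" if "x \<in> W" for c x
      using that by (simp add: W_def mlin_scale[OF linphi] mult.commute)
  qed
  have "sl2_submodule sc Lm L0 Lp W"
    unfolding sl2_submodule_def
    using sub by (auto simp: W_def cm c0 cp mlin_scale[OF linLm] mlin_scale[OF linL0] mlin_scale[OF linLp])
  moreover have "x \<in> W" if "p \<noteq> 0" "opoly sc L0 p x \<in> W" for p x
  proof -
    have "op p (\<phi> x) = op p (sc \<mu> x)"
      using that by (simp add: W_def opoly_eq phi_op msc.pact_vscale[OF linL0])
    then have "op p (\<phi> x - sc \<mu> x) = 0"
      using mlin_add[OF msc.pact_mlin[OF linL0, of p], of "\<phi> x - sc \<mu> x" "sc \<mu> x"] by simp
    then have "\<phi> x - sc \<mu> x = 0" using torsion that(1) by blast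
    then show ?thesis by (simp add: W_def)
  qed
  ultimately have "pure_submodule sc Lm L0 Lp W" unfolding pure_submodule_def by blast
  then have "W = {0} \<or> W = UNIV" using pi by (simp add: purely_irreducible_def)
  moreover have "w \<in> W" using w by (simp add: W_def)
  ultimately have "W = UNIV" using w by auto
  then show ?thesis by (auto simp: W_def)
qed

lemma schur: "\<exists>c. \<forall>v. \<phi> v = sc c v"
proof -
  obtain N :: nat where rk: "\<And>w. \<exists>r. (\<exists>i\<le>N. r i \<noteq> 0) \<and> (\<Sum>i\<le>N. op (r i) (w i)) = 0"
    using rank by metis
  obtain v1 :: 'v where v1: "v1 \<noteq> 0" using nontriv by blast
  obtain r where r: "\<exists>i\<le>N. r i \<noteq> 0" "(\<Sum>i\<le>N. op (r i) ((\<phi> ^^ i) v1)) = 0"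
    using rk[of "\<lambda>i. (\<phi> ^^ i) v1"] by blast
  define F1 where "F1 = (\<Sum>i\<le>N. monom (r i) i)"
  have cF1: "coeff F1 i = r i" if "i \<le> N" for i
    using that by (simp add: F1_def coeff_sum coeff_monom)
  have F1: "F1 \<noteq> 0"
  proof
    assume "F1 = 0"
    with r(1) cF1 show False by (metis coeff_0)
  qed
  have "act F1 v1 = (\<Sum>i\<le>N. op (r i) ((\<phi> ^^ i) v1))"
    by (simp add: F1_def act_sum act_monom)
  then have aF1: "act F1 v1 = 0" using r(2) by simp
  define P where "P n \<longleftrightarrow> (\<exists>F v. F \<noteq> 0 \<and> degree F = n \<and> v \<noteq> 0 \<and> act F v = 0)" for n
  have "P (degree F1)" unfolding P_def using F1 v1 aF1 by blast
  define d where "d = (LEAST n. P n)"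
  have "P d" unfolding d_def by (rule LeastI) fact
  then obtain F0 v0 where F0: "F0 \<noteq> 0" "degree F0 = d" "v0 \<noteq> 0" "act F0 v0 = 0"
    unfolding P_def by blast
  have min: "u = 0" if "H \<noteq> 0" "degree H < d" "act H u = 0" for H u
  proof (rule ccontr)
    assume "u \<noteq> 0"
    then have "P (degree H)" unfolding P_def using that by blast
    then show False using not_less_Least[OF that(2)[unfolded d_def]] by blast
  qed
  have "\<exists>m::int. \<forall>i\<le>N. \<exists>x. x \<noteq> 0 \<and> act (sh (m + int i) F0) x = 0"
  proof (cases "\<forall>j\<le>N. (Lp ^^ j) v0 \<noteq> 0")
    case True
    show ?thesis
      by (rule exI[of _ 0]) (use True Lp_pow_act[OF F0(4)] in auto)
  next
    case False
    then obtain j where j: "(Lp ^^ j) v0 = 0" by blast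
    define j0 where "j0 = (LEAST j. (Lp ^^ j) v0 = 0)"
    have j0: "(Lp ^^ j0) v0 = 0" unfolding j0_def by (rule LeastI[of _ j]) (rule j)
    have "j0 \<noteq> 0"
    proof
      assume "j0 = 0" then show False using j0 F0(3) by simp
    qed
    then obtain j1 where j1: "j0 = Suc j1" by (cases j0) auto
    define w where "w = (Lp ^^ j1) v0"
    have w0: "w \<noteq> 0" unfolding w_def using not_less_Least[of j1 "\<lambda>j. (Lp ^^ j) v0 = 0"] j1 j0_def by auto
    have wLp: "Lp w = 0" using j0 j1 by (simp add: w_def)
    have aw: "act (sh (int j1) F0) w = 0" unfolding w_def by (rule Lp_pow_act[OF F0(4)])
    show ?thesis
    proof (rule exI[of _ "int j1 - int N"], intro allI impI)
      fix i assume i: "i \<le> N"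
      have "act (sh (- int (N - i)) (sh (int j1) F0)) ((Lm ^^ (N - i)) w) = 0"
        by (rule Lm_pow_act[OF aw])
      moreover have "- int (N - i) + int j1 = int j1 - int N + int i" using i by simp
      ultimately have "act (sh (int j1 - int N + int i) F0) ((Lm ^^ (N - i)) w) = 0"
        by (simp only: sh_sh)
      moreover have "(Lm ^^ (N - i)) w \<noteq> 0" by (rule chain[OF w0 wLp])
      ultimately show "\<exists>x. x \<noteq> 0 \<and> act (sh (int j1 - int N + int i) F0) x = 0" by blast
    qed
  qed
  then obtain m :: int where m: "\<forall>i\<le>N. \<exists>x. x \<noteq> 0 \<and> act (sh (m + int i) F0) x = 0" by blast
  have "\<forall>i. \<exists>x. i \<le> N \<longrightarrow> x \<noteq> 0 \<and> act (sh (m + int i) F0) x = 0" using m by blast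
  from choice[OF this] obtain X where X0: "\<forall>i. i \<le> N \<longrightarrow> X i \<noteq> 0 \<and> act (sh (m + int i) F0) (X i) = 0"
    by blast
  have X: "X i \<noteq> 0 \<and> act (sh (m + int i) F0) (X i) = 0" if "i \<le> N" for i using X0 that by blast
  obtain p where p: "\<exists>i\<le>N. p i \<noteq> 0" "(\<Sum>i\<le>N. op (p i) (X i)) = 0"
    using rk[of X] by blast
  have "\<exists>i1\<in>{..N}. \<exists>i2\<in>{..N}. i1 \<noteq> i2 \<and> (\<exists>u. u \<noteq> 0 \<and> act (sh (m + int i1) F0) u = 0 \<and> act (sh (m + int i2) F0) u = 0)"
    by (rule indep[of "{..N}" X "\<lambda>i. sh (m + int i) F0" p]) (use X p in auto)
  then obtain i1 i2 u where iu: "i1 \<noteq> i2" "u \<noteq> 0" "act (sh (m + int i1) F0) u = 0" "act (sh (m + int i2) F0) u = 0"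
    by blast
  obtain a b where ab: "a \<noteq> 0" "b \<noteq> 0" "smult a (sh (m + int i2) F0) = smult b (sh (m + int i1) F0)"
    apply (rule exE[OF propto[where Ga="sh (m + int i1) F0" and Gb="sh (m + int i2) F0" and u=u and d=d]])
    subgoal using min by blast
    using iu F0 by auto
  define k where "k = - (m + int i1)"
  define q where "q = int i2 - int i1"
  have q0: "q \<noteq> 0" using iu(1) by (simp add: q_def)
  define a' where "a' = pcompose a [:of_int k, 1:]"
  define b' where "b' = pcompose b [:of_int k, 1:]"
  have a'0: "a' \<noteq> 0" using ab(1) by (simp add: a'_def pcomp_shift_eq0)
  have "sh k (smult a (sh (m + int i2) F0)) = sh k (smult b (sh (m + int i1) F0))" using ab by simp
  then have eqF: "smult a' (sh q F0) = smult b' F0"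
    by (simp add: sh_smult sh_sh a'_def b'_def k_def q_def)
  define fd where "fd = coeff F0 d"
  have fd0: "fd \<noteq> 0" using F0(1,2) unfolding fd_def by (metis leading_coeff_0_iff)
  have cj: "a' * pcompose (coeff F0 j) [:of_int q, 1:] = b' * coeff F0 j" for j
    using arg_cong[OF eqF, of "\<lambda>F. coeff F j"] by (simp add: coeff_sh)
  have exC: "\<exists>c. coeff F0 j = smult c fd" for j
  proof (rule periodic_const[OF fd0])
    show "(of_int q :: complex) \<noteq> 0" using q0 by simp
    have "a' * (pcompose (coeff F0 j) [:of_int q, 1:] * fd) = a' * (coeff F0 j * pcompose fd [:of_int q, 1:])"
    proof -
      have "a' * (pcompose (coeff F0 j) [:of_int q, 1:] * fd) = (a' * pcompose (coeff F0 j) [:of_int q, 1:]) * fd"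
        by (simp add: mult.assoc)
      also have "\<dots> = b' * coeff F0 j * fd" using cj[of j] by simp
      also have "\<dots> = coeff F0 j * (a' * pcompose fd [:of_int q, 1:])" using cj[of d] by (simp add: fd_def mult_ac)
      also have "\<dots> = a' * (coeff F0 j * pcompose fd [:of_int q, 1:])" by (simp add: mult_ac)
      finally show ?thesis .
    qed
    then show "pcompose (coeff F0 j) [:of_int q, 1:] * fd = coeff F0 j * pcompose fd [:of_int q, 1:]"
      using a'0 by simp
  qed
  have "\<forall>j. \<exists>c. coeff F0 j = smult c fd" using exC by blast
  from choice[OF this] obtain C where C0: "\<forall>j. coeff F0 j = smult (C j) fd" by blast
  have C: "coeff F0 j = smult (C j) fd" for j using C0 by blast
  have Cd: "C d = 1"
  proof -
    have "smult (C d - 1) fd = 0" using C[of d] by (simp add: fd_def smult_diff_left)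
    then show ?thesis using fd0 by simp
  qed
  define G' where "G' = (\<Sum>j\<le>d. monom (C j) j)"
  have cG: "coeff G' j = (if j \<le> d then C j else 0)" for j
    by (simp add: G'_def coeff_sum coeff_monom)
  have dG: "degree G' \<le> d" by (rule degree_le) (simp add: cG)
  have G0: "G' \<noteq> 0" using cG[of d] Cd by auto
  have mfd: "mlin sc (op fd)" by (rule msc.pact_mlin[OF linL0])
  have "0 = act F0 v0" using F0 by simp
  also have "\<dots> = (\<Sum>j\<le>d. op (coeff F0 j) ((\<phi> ^^ j) v0))"
    using F0(2) by (simp add: act_bound)
  also have "\<dots> = (\<Sum>j\<le>d. op fd (sc (C j) ((\<phi> ^^ j) v0)))"
    by (simp add: C msc.pact_smult msc.pact_vscale[OF linL0])
  also have "\<dots> = op fd (\<Sum>j\<le>d. sc (C j) ((\<phi> ^^ j) v0))"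
    by (rule addf_sum[OF mlin_addf[OF mfd], symmetric])
  also have "(\<Sum>j\<le>d. sc (C j) ((\<phi> ^^ j) v0)) = pact sc \<phi> G' v0"
    by (simp add: msc.pact_bound[OF dG] cG)
  finally have "pact sc \<phi> G' v0 = 0" using torsion fd0 by metis
  then obtain \<mu> w where "w \<noteq> 0" "\<phi> w = sc \<mu> w" using eig[OF G0 _ F0(3)] by blast
  then show ?thesis using kernel_pure by blast
qed

end


context PI
begin

lemma schur_gen:
  assumes "Vector_Spaces.linear sc sc \<phi>" "\<And>v. \<phi> (Lm v) = Lm (\<phi> v)"
    "\<And>v. \<phi> (L0 v) = L0 (\<phi> v)" "\<And>v. \<phi> (Lp v) = Lp (\<phi> v)"
  shows "\<exists>c. \<forall>v. \<phi> v = sc c v"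
proof -
  interpret PIphi sc Lm L0 Lp \<phi>
    by (intro PIphi.intro PI_axioms PIphi_axioms.intro assms)
  show ?thesis by (rule schur)
qed

lemma mlin_diff: "mlin sc T \<Longrightarrow> T (x - y) = T x - T y"
  using mlin_add[of sc T "x - y" y] by (simp add: eq_diff_eq)

lemma sc2: "sc 2 x = x + x"
  using msc.scale_left_distrib[of 1 1 x] by (simp add: one_add_one)

abbreviation cas where "cas \<equiv> casimir Lm L0 Lp"

lemma cas_lin: "Vector_Spaces.linear sc sc cas"
  unfolding Vector_Spaces.linear_iff
proof (intro conjI allI)
  show "vector_space sc" by (rule vs)
  show "vector_space sc" by (rule vs)
  fix x y
  show "cas (x + y) = cas x + cas y"
    by (simp add: casimir_def mlin_add[OF linL0] mlin_add[OF linLm] mlin_add[OF linLp] algebra_simps)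
  fix c
  show "cas (sc c x) = sc c (cas x)"
    by (simp add: casimir_def mlin_scale[OF linL0] mlin_scale[OF linLm] mlin_scale[OF linLp]
        msc.scale_right_diff_distrib)
qed

lemma cas_L0: "cas (L0 v) = L0 (cas v)"
proof -
  have "Lm (Lp (L0 v)) = L0 (Lm (Lp v))"
    by (simp add: rel2 rel3 mlin_add[OF linLm])
  then show ?thesis
    by (simp add: casimir_def mlin_diff[OF linL0])
qed

lemma cas_Lp: "cas (Lp v) = Lp (cas v)"
proof -
  have a: "Lp (L0 (L0 v)) = L0 (L0 (Lp v)) + L0 (Lp v) + L0 (Lp v) + Lp v"
    by (simp add: rel2 mlin_add[OF linL0] algebra_simps)
  have b: "Lp (Lm (Lp v)) = Lm (Lp (Lp v)) + L0 (Lp v) + L0 (Lp v)"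
    by (simp add: rel1 sc2 algebra_simps)
  show ?thesis
    by (simp add: casimir_def mlin_diff[OF linLp] a b rel2 mlin_add[OF linLp] mlin_add[OF linL0] algebra_simps)
qed

lemma cas_Lm: "cas (Lm v) = Lm (cas v)"
proof -
  have a: "Lm (L0 (L0 v)) = L0 (L0 (Lm v)) - L0 (Lm v) - L0 (Lm v) + Lm v"
    by (simp add: rel3 mlin_diff[OF linL0] algebra_simps)
  have b: "Lm (Lp (Lm v)) = Lm (Lm (Lp v)) + L0 (Lm v) - Lm v + L0 (Lm v) - Lm v"
    by (simp add: rel1 sc2 mlin_add[OF linLm] rel3 algebra_simps)
  show ?thesis
    by (simp add: casimir_def mlin_diff[OF linLm] a b rel3 mlin_add[OF linLm] mlin_diff[OF linL0] algebra_simps)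
qed

end

theorem proposition7p28:
  fixes sc :: "complex \<Rightarrow> 'v::ab_group_add \<Rightarrow> 'v"
    and Lm L0 Lp :: "'v \<Rightarrow> 'v"
  assumes "purely_irreducible sc Lm L0 Lp"
  shows "(\<exists>\<mu>::complex. \<forall>v. casimir Lm L0 Lp v = sc \<mu> v) \<and>
         (\<forall>\<phi>. Vector_Spaces.linear sc sc \<phi> \<and>
               (\<forall>v. \<phi> (Lm v) = Lm (\<phi> v)) \<and> (\<forall>v. \<phi> (L0 v) = L0 (\<phi> v)) \<and>
               (\<forall>v. \<phi> (Lp v) = Lp (\<phi> v))
            \<longrightarrow> (\<exists>c::complex. \<forall>v. \<phi> v = sc c v))"
proof -
  interpret PI sc Lm L0 Lp by (rule PI.intro) (rule assms)
  show ?thesis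
  proof (intro conjI allI impI)
    show "\<exists>\<mu>. \<forall>v. casimir Lm L0 Lp v = sc \<mu> v"
      by (rule schur_gen[OF cas_lin cas_Lm cas_L0 cas_Lp])
    fix \<phi> :: "'v \<Rightarrow> 'v"
    assume h: "Vector_Spaces.linear sc sc \<phi> \<and> (\<forall>v. \<phi> (Lm v) = Lm (\<phi> v)) \<and>
      (\<forall>v. \<phi> (L0 v) = L0 (\<phi> v)) \<and> (\<forall>v. \<phi> (Lp v) = Lp (\<phi> v))"
    show "\<exists>c. \<forall>v. \<phi> v = sc c v"
      by (rule schur_gen) (use h in auto)
  qed
qed


end
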